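(* If $X$ is a perfectly normal $T_1$ space, then $T''(X)$ is a (Von Neumann) regular ring.
   Context: $C(X)$ is the ring of real-valued continuous functions on $X$; a cozero set is a set $\{x: h(x)\neq 0\}$ with $h\in C(X)$. $T''(X)$ is the ring (under pointwise operations) of all functions $f\colon X\to\mathbb{R}$ for which there is a dense cozero set $U$ of $X$ with $f|_U$ continuous. A commutative ring $R$ is regular if for each $a\in R$ there is $x\in R$ with $a=a^2x$. $X$ is perfectly normal if it is normal and every closed set is a $G_\delta$-set (equivalently, every closed set is a zero set). *)

theory Defs
  imports "HOL-Analysis.Analysis"
begin

definition perfectly_normal_space :: "'a topology \<Rightarrow> bool" where
  "perfectly_normal_space X \<longleftrightarrow>
     normal_space X \<and> (\<forall>C. closedin X C \<longrightarrow> gdelta_in X C)"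

definition cozero_set_in :: "'a topology \<Rightarrow> 'a set \<Rightarrow> bool" where
  "cozero_set_in X U \<longleftrightarrow>
     (\<exists>h. continuous_map X euclideanreal h \<and> U = {x \<in> topspace X. h x \<noteq> 0})"

text \<open>T''(X): real functions on X (extended by 0 outside topspace X, so that
  functions on X correspond one-to-one to elements) that are continuous on some
  dense cozero set.\<close>
definition Tpp :: "'a topology \<Rightarrow> ('a \<Rightarrow> real) set" where
  "Tpp X = {f. (\<forall>x. x \<notin> topspace X \<longrightarrow> f x = 0) \<and>
     (\<exists>U. cozero_set_in X U \<and> X closure_of U = topspace X \<and>
          continuous_map (subtopology X U) euclideanreal f)}"

definition regular_fun_ring :: "('a \<Rightarrow> real) set \<Rightarrow> bool" where
  "regular_fun_ring R \<longleftrightarrow>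
     (\<forall>a\<in>R. \<exists>g\<in>R. a = (\<lambda>x. (a x)\<^sup>2 * g x))"

end

theory Submission
  imports Defs
begin

lemma open_cozero:
  assumes pn: "perfectly_normal_space X" and W: "openin X W"
  shows "cozero_set_in X W"
proof -
  let ?C = "topspace X - W"
  have nX: "normal_space X" and gd: "gdelta_in X ?C"
    using pn W unfolding perfectly_normal_space_def by auto
  then obtain T where T: "countable T" "T \<subseteq> Collect (openin X)" "\<Inter>T = ?C"
    unfolding gdelta_in_alt intersection_of_def by auto
  define T' where "T' = insert (topspace X) T"
  define G where "G = from_nat_into T'"
  have rG: "range G = T'" unfolding G_def T'_def using T by simp
  have G: "openin X (G n)" for n
  proof -
    have "G n \<in> T'" using rG by blast
    then show ?thesis using T unfolding T'_def by auto
  qed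
  have GC: "\<Inter>(range G) = ?C" using rG T unfolding T'_def by auto
  have "\<exists>h. continuous_map X (top_of_set {0..1::real}) h \<and> h ` ?C \<subseteq> {0} \<and> h ` (topspace X - G n) \<subseteq> {1}" for n
  proof -
    have "disjnt ?C (topspace X - G n)" using GC unfolding disjnt_def by auto
    moreover have "closedin X ?C" using W by auto
    moreover have "closedin X (topspace X - G n)" using G by auto
    ultimately obtain h where "continuous_map X (top_of_set {0..1::real}) h" "h ` ?C \<subseteq> {0}" "h ` (topspace X - G n) \<subseteq> {1}"
      using Urysohn_lemma[OF nX, of ?C "topspace X - G n" "0::real" 1] by auto
    then show ?thesis by blast
  qed
  then obtain h where hc: "\<And>n. continuous_map X (top_of_set {0..1::real}) (h n)"
    and h0: "\<And>n. h n ` ?C \<subseteq> {0}" and h1: "\<And>n. h n ` (topspace X - G n) \<subseteq> {1}"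
    by metis
  have hce: "continuous_map X euclideanreal (h n)" for n
    using hc continuous_map_in_subtopology by blast
  have hb: "x \<in> topspace X \<Longrightarrow> h n x \<in> {0..1}" for n x
    using hc[of n] by (auto simp: continuous_map_def)
  define k where "k x = (\<Sum>n. (1/2)^n * h n x)" for x
  have bnd: "norm ((1/2::real)^n * h n x) \<le> (1/2)^n" if "x \<in> topspace X" for n x
    using hb[OF that, of n] by (auto simp: abs_mult)
  have sm: "summable (\<lambda>n. (1/2)^n * h n x)" if "x \<in> topspace X" for x
    by (rule summable_comparison_test[of _ "\<lambda>n. (1/2::real)^n"]) (use bnd[OF that] in auto)
  have ul: "uniform_limit (topspace X) (\<lambda>n x. \<Sum>i<n. (1/2)^i * h i x) k sequentially"
    unfolding k_def by (rule Weierstrass_m_test[OF bnd]) auto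
  have kc: "continuous_map X euclideanreal k"
  proof -
    have "continuous_map X Met_TC.mtopology k"
    proof (rule Met_TC.continuous_map_uniform_limit[where F=sequentially and f="\<lambda>n x. \<Sum>i<n. (1/2)^i * h i x"])
      show "\<forall>\<^sub>F n in sequentially. continuous_map X Met_TC.mtopology (\<lambda>x. \<Sum>i<n. (1/2)^i * h i x)"
        by (intro always_eventually allI) (simp, intro continuous_map_sum continuous_map_real_mult continuous_map_const[THEN iffD2] hce, auto)
      show "\<forall>\<^sub>F n in sequentially. \<forall>x\<in>topspace X. k x \<in> UNIV \<and> dist ((\<Sum>i<n. (1/2)^i * h i x)) (k x) < e"
        if "0 < e" for e using uniform_limitD[OF ul that] by simp
    qed auto
    then show ?thesis by simp
  qed
  have "W = {x \<in> topspace X. k x \<noteq> 0}"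
  proof (intro equalityI subsetI)
    fix x assume xW: "x \<in> W"
    then have xt: "x \<in> topspace X" using W openin_subset by blast
    then obtain n where "x \<notin> G n" using xW GC by blast
    then have "h n x = 1" using h1[of n] xt by auto
    then have "0 < k x" unfolding k_def
      by (intro suminf_pos2[where i=n] sm xt) (use hb[OF xt] in auto)
    then show "x \<in> {x \<in> topspace X. k x \<noteq> 0}" using xt by auto
  next
    fix x assume "x \<in> {x \<in> topspace X. k x \<noteq> 0}"
    moreover have "k x = 0" if "x \<in> ?C"
    proof -
      have "h n x = 0" for n using h0[of n] that by auto
      then show ?thesis unfolding k_def by simp
    qed
    ultimately show "x \<in> W" by auto
  qed
  then show ?thesis unfolding cozero_set_in_def using kc by blast
qed

theorem theorem3p2:
  fixes X :: "'a topology"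
  assumes "perfectly_normal_space X" and "t1_space X"
  shows "regular_fun_ring (Tpp X)"
  unfolding regular_fun_ring_def
proof
  fix f assume "f \<in> Tpp X"
  then obtain U where f0: "\<forall>x. x \<notin> topspace X \<longrightarrow> f x = 0" and Uc: "cozero_set_in X U"
    and Ud: "X closure_of U = topspace X" and fc: "continuous_map (subtopology X U) euclideanreal f"
    unfolding Tpp_def by auto
  have Uo: "openin X U"
  proof -
    obtain h where h: "continuous_map X euclideanreal h" "U = {x \<in> topspace X. h x \<noteq> 0}"
      using Uc unfolding cozero_set_in_def by auto
    have "openin X {x \<in> topspace X. h x \<in> -{0}}"
      by (rule openin_continuous_map_preimage[OF h(1)]) auto
    then show ?thesis using h(2) by simp
  qed
  have Ut: "U \<subseteq> topspace X" using Uo openin_subset by blast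
  define W1 where "W1 = {x \<in> U. f x \<noteq> 0}"
  have W1o: "openin X W1"
  proof -
    have "openin (subtopology X U) {x \<in> topspace (subtopology X U). f x \<in> -{0}}"
      by (rule openin_continuous_map_preimage[OF fc]) auto
    moreover have "{x \<in> topspace (subtopology X U). f x \<in> -{0}} = W1"
      using Ut unfolding W1_def by auto
    ultimately show ?thesis using Uo openin_trans_full by metis
  qed
  have W1t: "W1 \<subseteq> topspace X" using W1o openin_subset by blast
  define W2 where "W2 = topspace X - X closure_of W1"
  have W2o: "openin X W2" unfolding W2_def by auto
  define V where "V = W1 \<union> (U \<inter> W2)"
  have Vo: "openin X V" unfolding V_def using W1o W2o Uo by auto
  have Vc: "cozero_set_in X V" by (rule open_cozero[OF assms(1) Vo])
  have Vd: "X closure_of V = topspace X"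
    unfolding dense_intersects_open
  proof (intro allI impI)
    fix Q assume Q: "openin X Q \<and> Q \<noteq> {}"
    then have OU: "U \<inter> Q \<noteq> {}" using Ud unfolding dense_intersects_open by blast
    show "V \<inter> Q \<noteq> {}"
    proof (cases "W1 \<inter> Q = {}")
      case True
      have "Q \<inter> U \<subseteq> W2"
      proof
        fix x assume x: "x \<in> Q \<inter> U"
        have "x \<notin> X closure_of W1"
          using Q True x unfolding closure_of_eq_diff disjnt_def by blast
        then show "x \<in> W2" using x Ut unfolding W2_def by auto
      qed
      then show ?thesis using OU unfolding V_def by blast
    next
      case False
      then show ?thesis unfolding V_def by blast
    qed
  qed
  define g where "g = (\<lambda>x. inverse (f x))"
  have gc: "continuous_map (subtopology X V) euclideanreal g"
  proof (rule pasting_lemma[where I="{True,False}" and T="\<lambda>b. if b then W1 else U \<inter> W2"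
        and f="\<lambda>b. if b then (\<lambda>x. inverse (f x)) else (\<lambda>x. 0)"])
    fix i :: bool assume "i \<in> {True,False}"
    show "openin (subtopology X V) (if i then W1 else U \<inter> W2)"
      unfolding openin_subtopology using W1o W2o Uo V_def by auto
    show "continuous_map (subtopology (subtopology X V) (if i then W1 else U \<inter> W2)) euclideanreal
          (if i then (\<lambda>x. inverse (f x)) else (\<lambda>x. 0))"
    proof (cases i)
      case True
      have e: "subtopology (subtopology X V) W1 = subtopology X W1"
        unfolding subtopology_subtopology V_def by (metis Int_absorb1 Un_upper1 inf_commute)
      have "continuous_map (subtopology X W1) euclideanreal f"
        by (rule continuous_map_from_subtopology_mono[OF fc]) (auto simp: W1_def)
      then have "continuous_map (subtopology X W1) euclideanreal (\<lambda>x. inverse (f x))"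
        by (rule continuous_map_real_inverse) (auto simp: W1_def)
      then show ?thesis using True e by simp
    next
      case False
      then show ?thesis by simp
    qed
  next
    fix i j :: bool and x
    assume "i \<in> {True,False}" "j \<in> {True,False}"
      "x \<in> topspace (subtopology X V) \<inter> (if i then W1 else U \<inter> W2) \<inter> (if j then W1 else U \<inter> W2)"
    moreover have "W1 \<inter> W2 = {}" using closure_of_subset[OF W1t] unfolding W2_def by auto
    ultimately show "(if i then (\<lambda>x. inverse (f x)) else (\<lambda>x. 0)) x = (if j then (\<lambda>x. inverse (f x)) else (\<lambda>x. 0)) x"
      by (cases i; cases j) auto
  next
    fix x assume "x \<in> topspace (subtopology X V)"
    then show "\<exists>j. j \<in> {True,False} \<and> x \<in> (if j then W1 else U \<inter> W2) \<and>
          g x = (if j then (\<lambda>x. inverse (f x)) else (\<lambda>x. 0)) x"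
      unfolding V_def g_def W1_def by auto
  qed
  have "g \<in> Tpp X"
    unfolding Tpp_def using f0 Vc Vd gc by (auto simp: g_def)
  moreover have "f = (\<lambda>x. (f x)\<^sup>2 * g x)"
  proof
    fix x show "f x = (f x)\<^sup>2 * g x"
      by (cases "f x = 0") (auto simp: g_def power2_eq_square field_simps)
  qed
  ultimately show "\<exists>g\<in>Tpp X. f = (\<lambda>x. (f x)\<^sup>2 * g x)" by blast
qed

end
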